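(* Let $(S,d)$ be a finite metric space partitioned into two disjoint groups $S=S_1\cup S_2$, let $k_1,k_2$ be nonnegative integers with $k=k_1+k_2$, and let $r^*$ be the optimal radius of the fair $k$-center problem. Suppose the points arrive in a stream in which all points of $S_1$ arrive before all points of $S_2$, and let $\Gamma_1',\Gamma_2',\Gamma_{sub}$ be the sets produced by Algorithm B (described in the context) with $\lambda=2r^*$. Then: (1) $|\Gamma_1'|+|\Gamma_2'|\le k$; (2) $|\Gamma_2'|\le k_2$; (3) there exists a subset $\Gamma_1''\subseteq\Gamma_1'$ such that every $c\in\Gamma_1''$ has a replacement $\sigma(c)\in\Gamma_{sub}$ (so $d(c,\sigma(c))\le r^*$), and, with $\Gamma'_{sub}=\{\sigma(c): c\in\Gamma_1''\}\subseteq\Gamma_{sub}$, we have $|((\Gamma_1'\setminus\Gamma_1'')\cup\Gamma'_{sub})\cap S_1|\le k_1$.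
   Context: Fair $k$-center: $C\subseteq S$ is feasible if $|C\cap S_l|\le k_l$ for $l=1,2$; cost $\max_{s\in S}d(s,C)$, $d(s,C)=\min_{c\in C}d(s,c)$, $d(s,\emptyset)=\infty$; $r^*$ is the minimum cost over feasible $C$. Algorithm B (parameter $\lambda=2r^*$): initialize $\Gamma_1'=\Gamma_2'=\Gamma_{sub}=\emptyset$. Upon each arriving $i\in S_1$: if $d(i,\Gamma_1')>\lambda$, add $i$ to $\Gamma_1'$. Upon each arriving $i\in S_2$: if $|\Gamma_1'|\le k_1$, then add $i$ to $\Gamma_2'$ iff $d(i,\Gamma_1')>3\lambda/2$ and $d(i,\Gamma_2')>\lambda$; otherwise ($|\Gamma_1'|>k_1$), add $i$ to $\Gamma_2'$ iff $d(i,\Gamma_1'\cup\Gamma_2')>\lambda$, and, in addition, if there is a point $j\in\Gamma_1'$ that has no replacement yet and satisfies $d(i,j)\le\lambda/2$, add $i$ to $\Gamma_{sub}$ and designate $i$ as the replacement $\sigma(j)$ of such a $j$. Output $\Gamma_1',\Gamma_2',\Gamma_{sub}$. *)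

theory Defs
  imports "HOL-Library.Extended_Real"
begin

text \<open>Distance from a point to a set: d(s,C) = min over C, with d(s,{}) = infinity.\<close>
definition dset :: "('a \<Rightarrow> 'a \<Rightarrow> real) \<Rightarrow> 'a \<Rightarrow> 'a set \<Rightarrow> ereal" where
  "dset d s C = (INF c\<in>C. ereal (d s c))"

definition fk_cost :: "('a \<Rightarrow> 'a \<Rightarrow> real) \<Rightarrow> 'a set \<Rightarrow> 'a set \<Rightarrow> ereal" where
  "fk_cost d S C = (SUP s\<in>S. dset d s C)"

definition fair_feasible :: "'a set \<Rightarrow> 'a set \<Rightarrow> nat \<Rightarrow> nat \<Rightarrow> 'a set \<Rightarrow> bool" where
  "fair_feasible S1 S2 k1 k2 C \<longleftrightarrow>
     C \<subseteq> S1 \<union> S2 \<and> card (C \<inter> S1) \<le> k1 \<and> card (C \<inter> S2) \<le> k2"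

definition fair_opt :: "('a \<Rightarrow> 'a \<Rightarrow> real) \<Rightarrow> 'a set \<Rightarrow> 'a set \<Rightarrow> nat \<Rightarrow> nat \<Rightarrow> ereal" where
  "fair_opt d S1 S2 k1 k2 =
     (INF C\<in>{C. fair_feasible S1 S2 k1 k2 C}. fk_cost d (S1 \<union> S2) C)"

text \<open>State: (Gamma1', Gamma2', Gamma_sub, sigma),
  where sigma j = Some i means i is the designated replacement of j.  The choice of j
  (when several qualify) is left nondeterministic.\<close>
definition stepB :: "('a \<Rightarrow> 'a \<Rightarrow> real) \<Rightarrow> ereal \<Rightarrow> nat \<Rightarrow> 'a set \<Rightarrow> 'a set \<Rightarrow>
    'a set \<times> 'a set \<times> 'a set \<times> ('a \<Rightarrow> 'a option) \<Rightarrow> 'a \<Rightarrow>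
    'a set \<times> 'a set \<times> 'a set \<times> ('a \<Rightarrow> 'a option) \<Rightarrow> bool" where
  "stepB d lam k1 S1 S2 st i st' \<longleftrightarrow>
     (case st of (G1, G2, Gs, \<sigma>) \<Rightarrow> case st' of (G1', G2', Gs', \<sigma>') \<Rightarrow>
       (i \<in> S1 \<and>
          G1' = (if lam < dset d i G1 then insert i G1 else G1) \<and>
          G2' = G2 \<and> Gs' = Gs \<and> \<sigma>' = \<sigma>)
     \<or> (i \<in> S2 \<and> card G1 \<le> k1 \<and> G1' = G1 \<and>
          G2' = (if 3 * lam / 2 < dset d i G1 \<and> lam < dset d i G2 then insert i G2 else G2) \<and>
          Gs' = Gs \<and> \<sigma>' = \<sigma>)
     \<or> (i \<in> S2 \<and> k1 < card G1 \<and> G1' = G1 \<and>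
          G2' = (if lam < dset d i (G1 \<union> G2) then insert i G2 else G2) \<and>
          ((\<exists>j\<in>G1. \<sigma> j = None \<and> ereal (d i j) \<le> lam / 2 \<and>
                Gs' = insert i Gs \<and> \<sigma>' = \<sigma>(j := Some i))
           \<or> ((\<not> (\<exists>j\<in>G1. \<sigma> j = None \<and> ereal (d i j) \<le> lam / 2)) \<and>
                Gs' = Gs \<and> \<sigma>' = \<sigma>))))"

inductive runB :: "('a \<Rightarrow> 'a \<Rightarrow> real) \<Rightarrow> ereal \<Rightarrow> nat \<Rightarrow> 'a set \<Rightarrow> 'a set \<Rightarrow> 'a list \<Rightarrow>
    'a set \<times> 'a set \<times> 'a set \<times> ('a \<Rightarrow> 'a option) \<Rightarrow> bool"
  for d lam k1 S1 S2 where
  init: "runB d lam k1 S1 S2 [] ({}, {}, {}, (\<lambda>_. None))"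
| step: "runB d lam k1 S1 S2 xs st \<Longrightarrow> stepB d lam k1 S1 S2 st x st' \<Longrightarrow>
         runB d lam k1 S1 S2 (xs @ [x]) st'"

end

theory Submission
  imports Defs
begin

lemma INF_att: fixes f :: "'a \<Rightarrow> 'b::complete_linorder"
  assumes "finite A" "A \<noteq> {}" shows "\<exists>x\<in>A. (INF y\<in>A. f y) = f x"
proof -
  have "Min (f ` A) \<in> f ` A" using assms by (intro Min_in) auto
  moreover have "Min (f ` A) = (INF y\<in>A. f y)" using assms by (simp add: Min_Inf)
  ultimately show ?thesis by auto
qed

lemma dset_less:
  assumes "finite G" shows "(ereal a < dset d i G) \<longleftrightarrow> (\<forall>g\<in>G. a < d i g)"
proof (cases "G = {}")
  case True then show ?thesis by (simp add: dset_def top_ereal_def)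
next
  case False
  obtain g0 where g0: "g0 \<in> G" "(INF c\<in>G. ereal (d i c)) = ereal (d i g0)"
    using INF_att[OF assms False] by blast
  have g0': "dset d i G = ereal (d i g0)" using g0(2) by (simp add: dset_def)
  have le: "dset d i G \<le> ereal (d i g)" if "g \<in> G" for g
    unfolding dset_def using that by (rule INF_lower)
  show ?thesis
  proof
    assume A: "ereal a < dset d i G"
    show "\<forall>g\<in>G. a < d i g"
    proof
      fix g assume "g \<in> G"
      have "ereal a < ereal (d i g)" using A le[OF \<open>g \<in> G\<close>] by (rule less_le_trans)
      then show "a < d i g" by simp
    qed
  next
    assume "\<forall>g\<in>G. a < d i g"
    then show "ereal a < dset d i G" using g0 g0' by simp
  qed
qed

lemma stepB_real:
  assumes "finite G1" "finite G2"
  shows "stepB d (2 * ereal r) k1 S1 S2 (G1,G2,Gs,\<sigma>) x (G1',G2',Gs',\<sigma>') \<longleftrightarrow>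
   (x \<in> S1 \<and> G1' = (if \<forall>g\<in>G1. 2*r < d x g then insert x G1 else G1) \<and> G2'=G2 \<and> Gs'=Gs \<and> \<sigma>'=\<sigma>)
 \<or> (x\<in>S2 \<and> card G1 \<le> k1 \<and> G1'=G1 \<and> G2' = (if (\<forall>g\<in>G1. 3*r < d x g) \<and> (\<forall>g\<in>G2. 2*r < d x g) then insert x G2 else G2) \<and> Gs'=Gs \<and> \<sigma>'=\<sigma>)
 \<or> (x\<in>S2 \<and> k1 < card G1 \<and> G1'=G1 \<and> G2' = (if \<forall>g\<in>G1\<union>G2. 2*r < d x g then insert x G2 else G2) \<and>
    ((\<exists>j\<in>G1. \<sigma> j = None \<and> d x j \<le> r \<and> Gs' = insert x Gs \<and> \<sigma>' = \<sigma>(j := Some x))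
     \<or> ((\<not>(\<exists>j\<in>G1. \<sigma> j = None \<and> d x j \<le> r)) \<and> Gs'=Gs \<and> \<sigma>'=\<sigma>)))"
proof -
  have e: "2 * ereal r = ereal (2*r)" "3 * ereal (2*r) / 2 = ereal (3*r)" "ereal (2*r) / 2 = ereal r"
    by simp_all
  have h1: "(ereal (2*r) < dset d x G1) = (\<forall>g\<in>G1. 2*r < d x g)"
    using assms(1) by (rule dset_less)
  have h2: "(ereal (2*r) < dset d x G2) = (\<forall>g\<in>G2. 2*r < d x g)"
    using assms by (intro dset_less)
  have h3: "(ereal (3*r) < dset d x G1) = (\<forall>g\<in>G1. 3*r < d x g)"
    using assms by (intro dset_less)
  have h4: "(ereal (2*r) < dset d x (G1 \<union> G2)) = (\<forall>g\<in>G1 \<union> G2. 2*r < d x g)"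
    using assms by (intro dset_less) auto
  show ?thesis unfolding stepB_def e h1 h2 h3 h4 prod.case ereal_less_eq(3) by (rule refl)
qed

lemma runB_Nil: "runB d lam k1 S1 S2 [] st \<Longrightarrow> st = ({}, {}, {}, (\<lambda>_. None))"
  by (cases rule: runB.cases) auto

lemma runB_inf: "runB d (2 * \<infinity>) k1 S1 S2 zs st \<Longrightarrow> st = ({}, {}, {}, (\<lambda>_. None))"
proof (induction rule: runB.induct)
  case init then show ?case by simp
next
  case (step xs st x st')
  then show ?case by (cases st') (auto simp: stepB_def dset_def)
qed

definition Inv where
  "Inv d r k1 S1 S2 P G1 G2 Gs \<sigma> \<longleftrightarrow>
   G1 \<subseteq> S1 \<inter> P \<and> G2 \<subseteq> S2 \<inter> P \<and> Gs \<subseteq> S2 \<inter> P \<and>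
   (\<forall>a\<in>G1\<union>G2. \<forall>b\<in>G1\<union>G2. a \<noteq> b \<longrightarrow> 2*r < d a b) \<and>
   (\<forall>s\<in>S1 \<inter> P. \<exists>g\<in>G1. d s g \<le> 2*r) \<and>
   (card G1 \<le> k1 \<longrightarrow> (\<forall>g\<in>G2. \<forall>a\<in>G1. 3*r < d g a)) \<and>
   (\<forall>c. \<sigma> c \<noteq> None \<longrightarrow> c \<in> G1 \<and> the (\<sigma> c) \<in> Gs \<and> d (the (\<sigma> c)) c \<le> r) \<and>
   (k1 < card G1 \<longrightarrow> (\<forall>i\<in>S2 \<inter> P. \<forall>j\<in>G1. d i j \<le> r \<longrightarrow> \<sigma> j \<noteq> None))"

lemma inv:
  assumes fin: "finite (S1 \<union> S2)"
    and disj: "S1 \<inter> S2 = {}"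
    and d_zero: "\<And>x y. x \<in> S1 \<union> S2 \<Longrightarrow> y \<in> S1 \<union> S2 \<Longrightarrow> d x y = 0 \<longleftrightarrow> x = y"
    and d_sym: "\<And>x y. x \<in> S1 \<union> S2 \<Longrightarrow> y \<in> S1 \<union> S2 \<Longrightarrow> d x y = d y x"
    and d_tri: "\<And>x y z. x \<in> S1 \<union> S2 \<Longrightarrow> y \<in> S1 \<union> S2 \<Longrightarrow> z \<in> S1 \<union> S2 \<Longrightarrow>
                  d x z \<le> d x y + d y z"
    and xs: "set xs = S1" and ys: "set ys = S2" and r0: "0 \<le> r"
    and run: "runB d (2 * ereal r) k1 S1 S2 zs st"
    and pre: "zs @ rest = xs @ ys"
  shows "case st of (G1, G2, Gs, \<sigma>) \<Rightarrow> Inv d r k1 S1 S2 (set zs) G1 G2 Gs \<sigma>"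
  using run pre
proof (induction arbitrary: rest rule: runB.induct)
  case init
  then show ?case by (simp add: Inv_def)
next
  case (step zs st x st')
  obtain G1 G2 Gs \<sigma> where st: "st = (G1, G2, Gs, \<sigma>)" by (cases st) auto
  obtain G1' G2' Gs' \<sigma>' where st': "st' = (G1', G2', Gs', \<sigma>')" by (cases st') auto
  have pre': "zs @ (x # rest) = xs @ ys" using step.prems by simp
  have I: "Inv d r k1 S1 S2 (set zs) G1 G2 Gs \<sigma>" using step.IH[OF pre'] st by simp
  have setpre: "set zs \<union> insert x (set rest) = S1 \<union> S2"
    using arg_cong[OF pre', of set] xs ys by simp
  have xS: "x \<in> S1 \<union> S2" using setpre by blast
  have zsS: "set zs \<subseteq> S1 \<union> S2" using setpre by blast
  have phase1: "set zs \<inter> S2 = {}" if "x \<in> S1"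
  proof -
    from pre'[unfolded append_eq_append_conv2] obtain us where
      "(zs = xs @ us \<and> us @ x # rest = ys) \<or> (zs @ us = xs \<and> x # rest = us @ ys)"
      by blast
    then show ?thesis
    proof
      assume "zs = xs @ us \<and> us @ x # rest = ys"
      then have "x \<in> S2" using ys by auto
      then show ?thesis using that disj by auto
    next
      assume "zs @ us = xs \<and> x # rest = us @ ys"
      then have "set zs \<subseteq> S1" using xs by auto
      then show ?thesis using disj by auto
    qed
  qed
  have "G1 \<subseteq> S1 \<inter> set zs \<and> G2 \<subseteq> S2 \<inter> set zs \<and> Gs \<subseteq> S2 \<inter> set zs \<and>
   (\<forall>a\<in>G1\<union>G2. \<forall>b\<in>G1\<union>G2. a \<noteq> b \<longrightarrow> 2*r < d a b) \<and>
   (\<forall>s\<in>S1 \<inter> set zs. \<exists>g\<in>G1. d s g \<le> 2*r) \<and>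
   (card G1 \<le> k1 \<longrightarrow> (\<forall>g\<in>G2. \<forall>a\<in>G1. 3*r < d g a)) \<and>
   (\<forall>c. \<sigma> c \<noteq> None \<longrightarrow> c \<in> G1 \<and> the (\<sigma> c) \<in> Gs \<and> d (the (\<sigma> c)) c \<le> r) \<and>
   (k1 < card G1 \<longrightarrow> (\<forall>i\<in>S2 \<inter> set zs. \<forall>j\<in>G1. d i j \<le> r \<longrightarrow> \<sigma> j \<noteq> None))"
    using I unfolding Inv_def .
  note Iall = this
  note I1 = Iall[THEN conjunct1]
  note I2 = Iall[THEN conjunct2, THEN conjunct1]
  note I3 = Iall[THEN conjunct2, THEN conjunct2, THEN conjunct1]
  note I4 = Iall[THEN conjunct2, THEN conjunct2, THEN conjunct2, THEN conjunct1]
  note I5 = Iall[THEN conjunct2, THEN conjunct2, THEN conjunct2, THEN conjunct2, THEN conjunct1]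
  note I6 = Iall[THEN conjunct2, THEN conjunct2, THEN conjunct2, THEN conjunct2, THEN conjunct2, THEN conjunct1]
  note I7 = Iall[THEN conjunct2, THEN conjunct2, THEN conjunct2, THEN conjunct2, THEN conjunct2, THEN conjunct2, THEN conjunct1]
  note I8 = Iall[THEN conjunct2, THEN conjunct2, THEN conjunct2, THEN conjunct2, THEN conjunct2, THEN conjunct2, THEN conjunct2]
  have fS1: "finite S1" and fS2: "finite S2" using fin by auto
  have finG1: "finite G1" using finite_subset[OF _ fS1, of G1] I1 by blast
  have finG2: "finite G2" using finite_subset[OF _ fS2, of G2] I2 by blast
  have sym': "\<And>a b. a \<in> S1 \<union> S2 \<Longrightarrow> b \<in> S1 \<union> S2 \<Longrightarrow> d a b = d b a" by (rule d_sym)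
  have G1S: "G1 \<subseteq> S1 \<union> S2" and G2S: "G2 \<subseteq> S1 \<union> S2" using I1 I2 by auto
  have dxx: "d x x = 0" using d_zero xS by simp
  have "stepB d (2 * ereal r) k1 S1 S2 (G1,G2,Gs,\<sigma>) x (G1',G2',Gs',\<sigma>')" using step.hyps st st' by simp
  then have S: "(x \<in> S1 \<and> G1' = (if \<forall>g\<in>G1. 2*r < d x g then insert x G1 else G1) \<and> G2'=G2 \<and> Gs'=Gs \<and> \<sigma>'=\<sigma>)
 \<or> (x\<in>S2 \<and> card G1 \<le> k1 \<and> G1'=G1 \<and> G2' = (if (\<forall>g\<in>G1. 3*r < d x g) \<and> (\<forall>g\<in>G2. 2*r < d x g) then insert x G2 else G2) \<and> Gs'=Gs \<and> \<sigma>'=\<sigma>)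
 \<or> (x\<in>S2 \<and> k1 < card G1 \<and> G1'=G1 \<and> G2' = (if \<forall>g\<in>G1\<union>G2. 2*r < d x g then insert x G2 else G2) \<and>
    ((\<exists>j\<in>G1. \<sigma> j = None \<and> d x j \<le> r \<and> Gs' = insert x Gs \<and> \<sigma>' = \<sigma>(j := Some x))
     \<or> ((\<not>(\<exists>j\<in>G1. \<sigma> j = None \<and> d x j \<le> r)) \<and> Gs'=Gs \<and> \<sigma>'=\<sigma>)))"
    unfolding stepB_real[OF finG1 finG2] .
  let ?P = "insert x (set zs)"
  have I1': "G1 \<subseteq> S1 \<inter> ?P" and I2': "G2 \<subseteq> S2 \<inter> ?P" and I3': "Gs \<subseteq> S2 \<inter> ?P"
    using I1 I2 I3 by auto
  have I5': "\<forall>s\<in>S1 \<inter> ?P. \<exists>g\<in>G1. d s g \<le> 2*r" if "x \<in> S2"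
    using I5 that disj by auto
  have symx: "d a x = d x a" if "a \<in> G1 \<union> G2" for a
    using sym'[OF _ xS, of a] that G1S G2S by auto
  have pw3: "\<forall>a\<in>G1\<union>G2'. \<forall>b\<in>G1\<union>G2'. a \<noteq> b \<longrightarrow> 2*r < d a b"
    if e2: "G2' = (if \<forall>g\<in>G1\<union>G2. 2*r < d x g then insert x G2 else G2)"
  proof (cases "\<forall>g\<in>G1\<union>G2. 2*r < d x g")
    case True
    show ?thesis unfolding e2 if_P[OF True]
    proof (intro ballI impI)
      fix a b assume a: "a \<in> G1 \<union> insert x G2" and b: "b \<in> G1 \<union> insert x G2" and ab: "a \<noteq> b"
      consider "a = x" "b \<in> G1 \<union> G2" | "b = x" "a \<in> G1 \<union> G2" | "a \<in> G1 \<union> G2" "b \<in> G1 \<union> G2"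
        using a b ab by auto
      then show "2*r < d a b"
      proof cases
        case 1 then show ?thesis using True by simp
      next
        case 2 then show ?thesis using True symx[of a] by simp
      next
        case 3 then show ?thesis using I4 ab by blast
      qed
    qed
  next
    case False
    then show ?thesis unfolding e2 if_not_P[OF False] using I4 by blast
  qed
  have G2'sub3: "G2' \<subseteq> S2 \<inter> ?P"
    if "x \<in> S2" "G2' = (if \<forall>g\<in>G1\<union>G2. 2*r < d x g then insert x G2 else G2)"
    using I2' that by auto
  have uniq: "j' = j" if "j \<in> G1" "j' \<in> G1" "d x j \<le> r" "d x j' \<le> r" for j j'
  proof (rule ccontr)
    assume "j' \<noteq> j"
    then have "j \<noteq> j'" by simp
    moreover have "j \<in> G1 \<union> G2" "j' \<in> G1 \<union> G2" using that by auto
    ultimately have "2*r < d j j'" using I4 by blast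
    moreover have "d j j' \<le> d j x + d x j'" using d_tri G1S that xS by blast
    moreover have "d j x = d x j" using symx that by blast
    ultimately show False using that by linarith
  qed
  have goal: "Inv d r k1 S1 S2 ?P G1' G2' Gs' \<sigma>'"
    using S
  proof (elim disjE conjE)
    assume x1: "x \<in> S1" and e: "G1' = (if \<forall>g\<in>G1. 2*r < d x g then insert x G1 else G1)"
      "G2' = G2" "Gs' = Gs" "\<sigma>' = \<sigma>"
    have z: "set zs \<inter> S2 = {}" using phase1 x1 .
    have G2e: "G2 = {}" and Gse: "Gs = {}" using I2 I3 z by auto
    have sn: "\<sigma> c = None" for c using I7 Gse by auto
    have S2P: "S2 \<inter> ?P = {}" using z x1 disj by auto
    show ?thesis
    proof (cases "\<forall>g\<in>G1. 2*r < d x g")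
      case True
      have pw: "\<forall>a\<in>insert x G1. \<forall>b\<in>insert x G1. a \<noteq> b \<longrightarrow> 2*r < d a b"
      proof (intro ballI impI)
        fix a b assume a: "a \<in> insert x G1" and b: "b \<in> insert x G1" and ab: "a \<noteq> b"
        consider "a = x" "b \<in> G1" | "b = x" "a \<in> G1" | "a \<in> G1" "b \<in> G1" using a b ab by auto
        then show "2*r < d a b"
        proof cases
          case 1 then show ?thesis using True by simp
        next
          case 2 then show ?thesis using True symx[of a] by simp
        next
          case 3 then show ?thesis using I4 ab by blast
        qed
      qed
      have cv: "\<forall>s\<in>S1 \<inter> ?P. \<exists>g\<in>insert x G1. d s g \<le> 2*r"
        using I5 dxx r0 by auto
      show ?thesis unfolding Inv_def e if_P[OF True] G2e Gse
        using I1' pw cv x1 S2P sn by auto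
    next
      case False
      have cv: "\<forall>s\<in>S1 \<inter> ?P. \<exists>g\<in>G1. d s g \<le> 2*r"
        using I5 False by (auto simp: not_less)
      show ?thesis unfolding Inv_def e if_not_P[OF False] G2e Gse
        using I1' I4 cv S2P sn G2e by auto
    qed
  next
    assume x2: "x \<in> S2" and c: "card G1 \<le> k1" and e: "G1' = G1"
      "G2' = (if (\<forall>g\<in>G1. 3*r < d x g) \<and> (\<forall>g\<in>G2. 2*r < d x g) then insert x G2 else G2)"
      "Gs' = Gs" "\<sigma>' = \<sigma>"
    have nc: "\<not> k1 < card G1" using c by simp
    show ?thesis
    proof (cases "(\<forall>g\<in>G1. 3*r < d x g) \<and> (\<forall>g\<in>G2. 2*r < d x g)")
      case True
      have ax: "\<forall>g\<in>G1\<union>G2. 2*r < d x g" using True r0 by force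
      have pw: "\<forall>a\<in>G1 \<union> insert x G2. \<forall>b\<in>G1 \<union> insert x G2. a \<noteq> b \<longrightarrow> 2*r < d a b"
      proof (intro ballI impI)
        fix a b assume a: "a \<in> G1 \<union> insert x G2" and b: "b \<in> G1 \<union> insert x G2" and ab: "a \<noteq> b"
        consider "a = x" "b \<in> G1 \<union> G2" | "b = x" "a \<in> G1 \<union> G2" | "a \<in> G1 \<union> G2" "b \<in> G1 \<union> G2"
          using a b ab by auto
        then show "2*r < d a b"
        proof cases
          case 1 then show ?thesis using ax by simp
        next
          case 2 then show ?thesis using ax symx[of a] by simp
        next
          case 3 then show ?thesis using I4 ab by blast
        qed
      qed
      have s3: "\<forall>g\<in>insert x G2. \<forall>a\<in>G1. 3*r < d g a" using I6 c True by auto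
      show ?thesis unfolding Inv_def e if_P[OF True]
        using I1' I2' I3' pw I5'[OF x2] s3 I7 nc x2 by auto
    next
      case False
      show ?thesis unfolding Inv_def e if_not_P[OF False]
        using I1' I2' I3' I4 I5'[OF x2] I6 I7 nc by auto
    qed
  next
    assume x2: "x \<in> S2" and c: "k1 < card G1" and e: "G1' = G1"
      "G2' = (if \<forall>g\<in>G1 \<union> G2. 2 * r < d x g then insert x G2 else G2)"
      and ex: "\<exists>j\<in>G1. \<sigma> j = None \<and> d x j \<le> r \<and> Gs' = insert x Gs \<and> \<sigma>' = \<sigma>(j := Some x)"
    from ex obtain j where j: "j \<in> G1" "\<sigma> j = None" "d x j \<le> r" "Gs' = insert x Gs" "\<sigma>' = \<sigma>(j := Some x)"
      by blast
    have nc: "\<not> card G1 \<le> k1" using c by simp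
    have A: "\<forall>c. \<sigma>' c \<noteq> None \<longrightarrow> c \<in> G1 \<and> the (\<sigma>' c) \<in> Gs' \<and> d (the (\<sigma>' c)) c \<le> r"
      using I7 j by auto
    have B: "\<forall>i\<in>S2 \<inter> ?P. \<forall>j'\<in>G1. d i j' \<le> r \<longrightarrow> \<sigma>' j' \<noteq> None"
    proof (intro ballI impI)
      fix i j' assume i: "i \<in> S2 \<inter> ?P" and j': "j' \<in> G1" and dij: "d i j' \<le> r"
      show "\<sigma>' j' \<noteq> None"
      proof (cases "i = x")
        case True
        then have "j' = j" using uniq[OF j(1) j' j(3)] dij by simp
        then show ?thesis using j by simp
      next
        case False
        then have "\<sigma> j' \<noteq> None" using I8 c i j' dij by auto
        then show ?thesis using j by auto
      qed
    qed
    have Gs'sub: "Gs' \<subseteq> S2 \<inter> ?P" using I3' j x2 by auto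
    show ?thesis unfolding Inv_def e(1)
      using I1' G2'sub3[OF x2 e(2)] Gs'sub pw3[OF e(2)] I5'[OF x2] nc A B by auto
  next
    assume x2: "x \<in> S2" and c: "k1 < card G1" and e: "G1' = G1"
      "G2' = (if \<forall>g\<in>G1 \<union> G2. 2 * r < d x g then insert x G2 else G2)"
      and j: "\<not> (\<exists>j\<in>G1. \<sigma> j = None \<and> d x j \<le> r)" "Gs' = Gs" "\<sigma>' = \<sigma>"
    have nc: "\<not> card G1 \<le> k1" using c by simp
    have B: "\<forall>i\<in>S2 \<inter> ?P. \<forall>j'\<in>G1. d i j' \<le> r \<longrightarrow> \<sigma> j' \<noteq> None"
    proof (intro ballI impI)
      fix i j' assume i: "i \<in> S2 \<inter> ?P" and j': "j' \<in> G1" and dij: "d i j' \<le> r"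
      show "\<sigma> j' \<noteq> None"
      proof (cases "i = x")
        case True then show ?thesis using j(1) j' dij by auto
      next
        case False then show ?thesis using I8 c i j' dij by auto
      qed
    qed
    show ?thesis unfolding Inv_def e(1) j(2,3)
      using I1' G2'sub3[OF x2 e(2)] I3' pw3[OF e(2)] I5'[OF x2] nc I7 B by auto
  qed
  then show ?case using st' by simp
qed

lemma INF_attained_le:
  assumes "finite C" "(INF c\<in>C. ereal (f c)) \<le> ereal r"
  shows "\<exists>c\<in>C. f c \<le> r"
proof (cases "C = {}")
  case True then show ?thesis using assms by (simp add: top_ereal_def)
next
  case False
  then obtain c where "c \<in> C" "(INF c\<in>C. ereal (f c)) = ereal (f c)" using INF_att[OF assms(1) False] by blast
  then show ?thesis using assms by auto
qed

theorem lemma5: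
  fixes d :: "'a \<Rightarrow> 'a \<Rightarrow> real" and S1 S2 :: "'a set" and k1 k2 :: nat
    and xs ys :: "'a list" and G1 G2 Gs :: "'a set" and \<sigma> :: "'a \<Rightarrow> 'a option"
  assumes fin: "finite (S1 \<union> S2)"
    and disj: "S1 \<inter> S2 = {}"
    and d_zero: "\<And>x y. x \<in> S1 \<union> S2 \<Longrightarrow> y \<in> S1 \<union> S2 \<Longrightarrow> d x y = 0 \<longleftrightarrow> x = y"
    and d_sym: "\<And>x y. x \<in> S1 \<union> S2 \<Longrightarrow> y \<in> S1 \<union> S2 \<Longrightarrow> d x y = d y x"
    and d_tri: "\<And>x y z. x \<in> S1 \<union> S2 \<Longrightarrow> y \<in> S1 \<union> S2 \<Longrightarrow> z \<in> S1 \<union> S2 \<Longrightarrow>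
                  d x z \<le> d x y + d y z"
    and stream: "distinct (xs @ ys)" "set xs = S1" "set ys = S2"
    and run: "runB d (2 * fair_opt d S1 S2 k1 k2) k1 S1 S2 (xs @ ys) (G1, G2, Gs, \<sigma>)"
  shows "card G1 + card G2 \<le> k1 + k2 \<and> card G2 \<le> k2 \<and>
    (\<exists>G1''\<subseteq>G1.
       (\<forall>c\<in>G1''. \<sigma> c \<noteq> None \<and> the (\<sigma> c) \<in> Gs \<and>
                  ereal (d c (the (\<sigma> c))) \<le> fair_opt d S1 S2 k1 k2) \<and>
       card (((G1 - G1'') \<union> (\<lambda>c. the (\<sigma> c)) ` G1'') \<inter> S1) \<le> k1)"
proof -
  let ?S = "S1 \<union> S2"
  let ?r = "fair_opt d S1 S2 k1 k2"
  have triv: "?thesis" if "G1 = {}" "G2 = {}" "Gs = {}" "\<sigma> = (\<lambda>_. None)"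
    using that by simp
  show ?thesis
  proof (cases "?S = {}")
    case True
    then have "xs @ ys = []" using stream by auto
    then have "(G1, G2, Gs, \<sigma>) = ({}, {}, {}, (\<lambda>_. None))" using run runB_Nil by metis
    then show ?thesis using triv by simp
  next
    case Sne: False
    have dnn: "0 \<le> d a b" if "a \<in> ?S" "b \<in> ?S" for a b
    proof -
      have "d a a \<le> d a b + d b a" using d_tri that by blast
      moreover have "d a a = 0" using d_zero that by simp
      moreover have "d b a = d a b" using d_sym that by simp
      ultimately show ?thesis by linarith
    qed
    define F where "F = {C. fair_feasible S1 S2 k1 k2 C}"
    have finF: "finite F" unfolding F_def fair_feasible_def
      by (rule finite_subset[of _ "Pow ?S"]) (use fin in auto)
    have "{} \<in> F" unfolding F_def fair_feasible_def by auto
    then obtain Cs where Cs: "Cs \<in> F" "?r = fk_cost d ?S Cs"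
      using INF_att[OF finF, of "fk_cost d ?S"] unfolding fair_opt_def F_def by blast
    have CsS: "Cs \<subseteq> ?S" and Cs1: "card (Cs \<inter> S1) \<le> k1" and Cs2: "card (Cs \<inter> S2) \<le> k2"
      using Cs(1) unfolding F_def fair_feasible_def by auto
    have finCs: "finite Cs" using finite_subset[OF CsS fin] .
    have dle: "dset d s Cs \<le> ?r" if "s \<in> ?S" for s
      unfolding Cs(2) fk_cost_def using that by (rule SUP_upper)
    obtain s0 where s0: "s0 \<in> ?S" using Sne by auto
    have "0 \<le> dset d s0 Cs" unfolding dset_def
      using dnn s0 CsS by (intro INF_greatest) auto
    then have r0: "0 \<le> ?r" using dle[OF s0] by simp
    show ?thesis
    proof (cases "?r = \<infinity>")
      case True
      then have "(G1, G2, Gs, \<sigma>) = ({}, {}, {}, (\<lambda>_. None))" using run runB_inf by metis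
      then show ?thesis using triv by simp
    next
      case False
      then obtain r where rr: "?r = ereal r" and r0': "0 \<le> r" using r0
        by (cases ?r) auto
      have cover: "\<exists>c\<in>Cs. d s c \<le> r" if "s \<in> ?S" for s
        using INF_attained_le[OF finCs] dle[OF that] rr unfolding dset_def by simp
      define f where "f s = (SOME c. c \<in> Cs \<and> d s c \<le> r)" for s
      have f: "f s \<in> Cs \<and> d s (f s) \<le> r" if "s \<in> ?S" for s
      proof -
        have "\<exists>c. c \<in> Cs \<and> d s c \<le> r" using cover[OF that] by blast
        then show ?thesis unfolding f_def by (rule someI_ex)
      qed
      have I: "Inv d r k1 S1 S2 (set (xs @ ys)) G1 G2 Gs \<sigma>"
      proof -
        have run': "runB d (2 * ereal r) k1 S1 S2 (xs @ ys) (G1, G2, Gs, \<sigma>)" using run rr by simp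
        show ?thesis
          using inv[OF fin disj d_zero d_sym d_tri stream(2,3) r0' run', where rest="[]"] by simp
      qed
      have P: "set (xs @ ys) = ?S" using stream by auto
      have G1S1: "G1 \<subseteq> S1" and G2S2: "G2 \<subseteq> S2" and GsS2: "Gs \<subseteq> S2"
        and pw: "\<forall>a\<in>G1\<union>G2. \<forall>b\<in>G1\<union>G2. a \<noteq> b \<longrightarrow> 2*r < d a b"
        and cov1: "\<forall>s\<in>S1. \<exists>g\<in>G1. d s g \<le> 2*r"
        and sep3: "card G1 \<le> k1 \<longrightarrow> (\<forall>g\<in>G2. \<forall>a\<in>G1. 3*r < d g a)"
        and sig: "\<forall>c. \<sigma> c \<noteq> None \<longrightarrow> c \<in> G1 \<and> the (\<sigma> c) \<in> Gs \<and> d (the (\<sigma> c)) c \<le> r"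
        and cov2: "k1 < card G1 \<longrightarrow> (\<forall>i\<in>S2. \<forall>j\<in>G1. d i j \<le> r \<longrightarrow> \<sigma> j \<noteq> None)"
        using I unfolding Inv_def P by auto
      have fS1: "finite S1" and fS2: "finite S2" using fin by auto
      have finG1: "finite G1" using finite_subset[OF G1S1 fS1] .
      have finG2: "finite G2" using finite_subset[OF G2S2 fS2] .
      have inj: "inj_on f (G1 \<union> G2)"
      proof (rule inj_onI, rule ccontr)
        fix a b assume ab: "a \<in> G1 \<union> G2" "b \<in> G1 \<union> G2" "f a = f b" "a \<noteq> b"
        have aS: "a \<in> ?S" and bS: "b \<in> ?S" using ab G1S1 G2S2 by auto
        have "2*r < d a b" using pw ab by blast
        moreover have "d a b \<le> d a (f a) + d (f a) b" using d_tri aS bS f[OF aS] CsS by blast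
        moreover have "d (f a) b = d b (f b)"
        proof -
          have fbS: "f b \<in> ?S" using f[OF bS] CsS by blast
          show ?thesis using d_sym[OF fbS bS] ab(3) by simp
        qed
        ultimately show False using f[OF aS] f[OF bS] by linarith
      qed
      have fim: "f ` (G1 \<union> G2) \<subseteq> Cs" using f G1S1 G2S2 by blast
      have cardCs: "card Cs \<le> k1 + k2"
      proof -
        have e: "Cs = (Cs \<inter> S1) \<union> (Cs \<inter> S2)" using CsS by auto
        have "card ((Cs \<inter> S1) \<union> (Cs \<inter> S2)) = card (Cs \<inter> S1) + card (Cs \<inter> S2)"
          by (rule card_Un_disjoint) (use finCs disj in auto)
        then have "card Cs = card (Cs \<inter> S1) + card (Cs \<inter> S2)" using e by simp
        then show ?thesis using Cs1 Cs2 by linarith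
      qed
      have cU: "card (G1 \<union> G2) = card G1 + card G2"
        using finG1 finG2 G1S1 G2S2 disj by (intro card_Un_disjoint) auto
      have c12: "card (G1 \<union> G2) \<le> card Cs" using card_inj_on_le[OF inj fim finCs] .
      have part1: "card G1 + card G2 \<le> k1 + k2" using cU c12 cardCs by linarith
      have part2: "card G2 \<le> k2"
      proof (cases "card G1 \<le> k1")
        case False then show ?thesis using part1 by linarith
      next
        case True
        have "f ` G2 \<subseteq> Cs \<inter> S2"
        proof
          fix y assume "y \<in> f ` G2"
          then obtain g where g: "g \<in> G2" "y = f g" by blast
          have gS: "g \<in> ?S" using g G2S2 by auto
          have yC: "y \<in> Cs" "d g y \<le> r" using f[OF gS] g by auto
          show "y \<in> Cs \<inter> S2"
          proof (rule ccontr)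
            assume "y \<notin> Cs \<inter> S2"
            then have y1: "y \<in> S1" using yC CsS by auto
            then obtain a where a: "a \<in> G1" "d y a \<le> 2*r" using cov1 by blast
            have "d g a \<le> d g y + d y a" using d_tri gS a G1S1 y1 by blast
            moreover have "3*r < d g a" using sep3 True g a by blast
            ultimately show False using yC a by linarith
          qed
        qed
        moreover have "inj_on f G2" using inj by (rule inj_on_subset) auto
        ultimately have "card G2 \<le> card (Cs \<inter> S2)" using finCs
          by (intro card_inj_on_le) auto
        then show ?thesis using Cs2 by linarith
      qed
      define G1'' where "G1'' = {c\<in>G1. \<sigma> c \<noteq> None}"
      have eqset: "((G1 - G1'') \<union> (\<lambda>c. the (\<sigma> c)) ` G1'') \<inter> S1 = {c\<in>G1. \<sigma> c = None}"
      proof -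
        have "(\<lambda>c. the (\<sigma> c)) ` G1'' \<subseteq> S2" using sig GsS2 unfolding G1''_def by auto
        then have "(\<lambda>c. the (\<sigma> c)) ` G1'' \<inter> S1 = {}" using disj by auto
        moreover have "(G1 - G1'') \<inter> S1 = {c\<in>G1. \<sigma> c = None}" using G1S1 unfolding G1''_def by auto
        ultimately show ?thesis by (simp add: Int_Un_distrib2)
      qed
      have part3: "card {c\<in>G1. \<sigma> c = None} \<le> k1"
      proof (cases "card G1 \<le> k1")
        case True
        have "card {c\<in>G1. \<sigma> c = None} \<le> card G1" by (rule card_mono[OF finG1]) auto
        then show ?thesis using True by linarith
      next
        case False
        have "f ` {c\<in>G1. \<sigma> c = None} \<subseteq> Cs \<inter> S1"
        proof
          fix y assume "y \<in> f ` {c\<in>G1. \<sigma> c = None}"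
          then obtain g where g: "g \<in> G1" "\<sigma> g = None" "y = f g" by blast
          have gS: "g \<in> ?S" using g G1S1 by auto
          have yC: "y \<in> Cs" "d g y \<le> r" using f[OF gS] g by auto
          show "y \<in> Cs \<inter> S1"
          proof (rule ccontr)
            assume "y \<notin> Cs \<inter> S1"
            then have y2: "y \<in> S2" using yC CsS by auto
            have "d y g = d g y" using d_sym[OF _ gS, of y] y2 by simp
            then have "d y g \<le> r" using yC by simp
            moreover have "k1 < card G1" using False by simp
            ultimately have "\<sigma> g \<noteq> None" using cov2 y2 g(1) by blast
            then show False using g(2) by simp
          qed
        qed
        moreover have "inj_on f {c\<in>G1. \<sigma> c = None}" using inj by (rule inj_on_subset) auto
        ultimately have "card {c\<in>G1. \<sigma> c = None} \<le> card (Cs \<inter> S1)" using finCs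
          by (intro card_inj_on_le) auto
        then show ?thesis using Cs1 by linarith
      qed
      have sig2: "\<forall>c\<in>G1''. \<sigma> c \<noteq> None \<and> the (\<sigma> c) \<in> Gs \<and> ereal (d c (the (\<sigma> c))) \<le> ?r"
      proof
        fix c assume c: "c \<in> G1''"
        then have h: "\<sigma> c \<noteq> None" "the (\<sigma> c) \<in> Gs" "d (the (\<sigma> c)) c \<le> r" "c \<in> G1"
          using sig unfolding G1''_def by auto
        have "d c (the (\<sigma> c)) = d (the (\<sigma> c)) c"
          using d_sym[of c "the (\<sigma> c)"] h G1S1 GsS2 by blast
        then show "\<sigma> c \<noteq> None \<and> the (\<sigma> c) \<in> Gs \<and> ereal (d c (the (\<sigma> c))) \<le> ?r"
          using h rr by simp
      qed
      have ex: "\<exists>G1''\<subseteq>G1.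
       (\<forall>c\<in>G1''. \<sigma> c \<noteq> None \<and> the (\<sigma> c) \<in> Gs \<and>
                  ereal (d c (the (\<sigma> c))) \<le> ?r) \<and>
       card (((G1 - G1'') \<union> (\<lambda>c. the (\<sigma> c)) ` G1'') \<inter> S1) \<le> k1"
      proof (intro exI conjI)
        show "G1'' \<subseteq> G1" unfolding G1''_def by auto
        show "\<forall>c\<in>G1''. \<sigma> c \<noteq> None \<and> the (\<sigma> c) \<in> Gs \<and> ereal (d c (the (\<sigma> c))) \<le> ?r"
          by (rule sig2)
        show "card (((G1 - G1'') \<union> (\<lambda>c. the (\<sigma> c)) ` G1'') \<inter> S1) \<le> k1"
          unfolding eqset by (rule part3)
      qed
      show ?thesis by (intro conjI part1 part2 ex)
    qed
  qed
qed

end
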